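(* Let $G$ be a graph of goods, $n\ge1$, $t\ge 1$ integers, and $c>0$ a real number. Suppose that for every regular collection of $n$ agents (respectively, for every regular collection of $n$ agents of at most $t$ types) with utility functions on $G$ there exists a $c$-sufficient allocation. Then for every collection of $n$ agents with arbitrary utility functions on $G$ (respectively, every collection of $n$ agents of at most $t$ types) there exists a $c$-sufficient allocation.
   Context: A graph of goods is a finite connected graph $G=(V,E)$ whose vertices are goods. A utility function on $G$ assigns a non-negative real number to each good and is extended additively to sets. A $G$-bundle is a subset of $V$ inducing a connected subgraph of $G$ (the empty set allowed). An $n$-split of $G$ is a sequence of $n$ pairwise disjoint $G$-bundles (possibly empty) whose union is $V$. $\mathrm{mms}^{(n)}(G,u)=\max_{P_1,\dots,P_n}\min_i u(P_i)$ over all $n$-splits. An allocation to agents $1,\dots,n$ with utilities $u_1,\dots,u_n$ is an $n$-split $P_1,\dots,P_n$ with $P_i$ given to agent $i$. For $c>0$, the allocation is $c$-sufficient if $u_i(P_i)\ge c\cdot\mathrm{mms}^{(n)}(G,u_i)$ for all $i$. Agents are of the same type if they have the same utility function. An agent with utility $u$ is $n$-proportional if $\mathrm{mms}^{(n)}(G,u)=u(V)/n$, and $n$-regular if moreover $\mathrm{mms}^{(n)}(G,u)=1$. A collection of $n$ agents is regular if every agent in it is $n$-regular. *)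

theory Defs
  imports Complex_Main "HOL-Library.FuncSet"
begin

definition connected_in :: "('a \<times> 'a) set \<Rightarrow> 'a set \<Rightarrow> bool" where
  "connected_in E S \<longleftrightarrow> (\<forall>x\<in>S. \<forall>y\<in>S. (x, y) \<in> (E \<inter> (S \<times> S))\<^sup>*)"

definition graph_of_goods :: "'a set \<Rightarrow> ('a \<times> 'a) set \<Rightarrow> bool" where
  "graph_of_goods V E \<longleftrightarrow> finite V \<and> V \<noteq> {} \<and> E \<subseteq> V \<times> V \<and> sym E \<and> connected_in E V"

definition utility_on :: "'a set \<Rightarrow> ('a \<Rightarrow> real) \<Rightarrow> bool" where
  "utility_on V u \<longleftrightarrow> (\<forall>x\<in>V. u x \<ge> 0)"

definition g_bundle :: "'a set \<Rightarrow> ('a \<times> 'a) set \<Rightarrow> 'a set \<Rightarrow> bool" where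
  "g_bundle V E S \<longleftrightarrow> S \<subseteq> V \<and> connected_in E S"

definition is_split :: "'a set \<Rightarrow> ('a \<times> 'a) set \<Rightarrow> nat \<Rightarrow> (nat \<Rightarrow> 'a set) \<Rightarrow> bool" where
  "is_split V E n P \<longleftrightarrow> (\<forall>i<n. g_bundle V E (P i))
     \<and> (\<forall>i<n. \<forall>j<n. i \<noteq> j \<longrightarrow> P i \<inter> P j = {})
     \<and> (\<Union>i<n. P i) = V"

definition mms :: "'a set \<Rightarrow> ('a \<times> 'a) set \<Rightarrow> nat \<Rightarrow> ('a \<Rightarrow> real) \<Rightarrow> real" where
  "mms V E n u = Max {Min {sum u (P i) | i. i < n} | P. is_split V E n P}"

definition proportional :: "'a set \<Rightarrow> ('a \<times> 'a) set \<Rightarrow> nat \<Rightarrow> ('a \<Rightarrow> real) \<Rightarrow> bool" where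
  "proportional V E n u \<longleftrightarrow> mms V E n u = sum u V / real n"

definition regular :: "'a set \<Rightarrow> ('a \<times> 'a) set \<Rightarrow> nat \<Rightarrow> ('a \<Rightarrow> real) \<Rightarrow> bool" where
  "regular V E n u \<longleftrightarrow> proportional V E n u \<and> mms V E n u = 1"

definition c_sufficient :: "'a set \<Rightarrow> ('a \<times> 'a) set \<Rightarrow> nat \<Rightarrow> real \<Rightarrow> (nat \<Rightarrow> 'a \<Rightarrow> real)
    \<Rightarrow> (nat \<Rightarrow> 'a set) \<Rightarrow> bool" where
  "c_sufficient V E n c us P \<longleftrightarrow> is_split V E n P \<and> (\<forall>i<n. sum (us i) (P i) \<ge> c * mms V E n (us i))"

definition num_types :: "'a set \<Rightarrow> nat \<Rightarrow> (nat \<Rightarrow> 'a \<Rightarrow> real) \<Rightarrow> nat" where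
  "num_types V n us = card ((\<lambda>i. restrict (us i) V) ` {..<n})"

end

theory Submission
  imports Defs
begin

lemma vals_eq: "{sum u (P i) | i. i < (n::nat)} = (\<lambda>i. sum u (P i)) ` {..<n}"
  by auto

lemma split_sub: "is_split V E n P \<Longrightarrow> i < n \<Longrightarrow> P i \<subseteq> V"
  by (auto simp: is_split_def g_bundle_def)

lemma min_le: assumes "i < (n::nat)" shows "Min {sum u (P i) | i. i < n} \<le> sum u (P i)"
proof -
  have "finite ((\<lambda>i. sum u (P i)) ` {..<n})" by simp
  then show ?thesis unfolding vals_eq using assms by (intro Min_le) auto
qed

lemma min_ge: assumes "(n::nat) \<ge> 1" "\<And>i. i < n \<Longrightarrow> b \<le> sum u (P i)" shows "b \<le> Min {sum u (P i) | i. i < n}"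
proof -
  have "finite ((\<lambda>i. sum u (P i)) ` {..<n})" by simp
  moreover have "(\<lambda>i. sum u (P i)) ` {..<n} \<noteq> {}" using assms(1) by (auto simp: lessThan_empty_iff)
  ultimately show ?thesis unfolding vals_eq using assms(2) by (subst Min_ge_iff) auto
qed

lemma fin_vals:
  assumes "finite V"
  shows "finite {Min {sum u (P i) | i. i < n} | P. is_split V E n P}"
proof -
  have "{Min {sum u (P i) | i. i < n} | P. is_split V E n P}
     \<subseteq> (\<lambda>Q. Min {sum u (Q i) | i. i < n}) ` (PiE {..<n} (\<lambda>_. Pow V))"
  proof
    fix x assume "x \<in> {Min {sum u (P i) | i. i < n} | P. is_split V E n P}"
    then obtain P where P: "is_split V E n P" "x = Min {sum u (P i) | i. i < n}" by blast
    have "restrict P {..<n} \<in> PiE {..<n} (\<lambda>_. Pow V)" using split_sub[OF P(1)] by auto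
    moreover have "{sum u (restrict P {..<n} i) | i. i < n} = {sum u (P i) | i. i < n}" by auto
    ultimately show "x \<in> (\<lambda>Q. Min {sum u (Q i) | i. i < n}) ` (PiE {..<n} (\<lambda>_. Pow V))"
      using P(2) by (intro image_eqI[where x="restrict P {..<n}"]) simp_all
  qed
  moreover have "finite (PiE {..<n} (\<lambda>_. Pow V))" using assms by (intro finite_PiE) auto
  ultimately show ?thesis using finite_subset finite_imageI by blast
qed

definition P0 :: "'a set \<Rightarrow> nat \<Rightarrow> 'a set" where
  "P0 V = (\<lambda>i. if i = 0 then V else {})"

lemma P0_split: "graph_of_goods V E \<Longrightarrow> n \<ge> 1 \<Longrightarrow> is_split V E n (P0 V)"
  unfolding is_split_def P0_def g_bundle_def graph_of_goods_def
  by (auto simp: connected_in_def)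

lemma mms_ge:
  assumes "graph_of_goods V E" "is_split V E n P"
  shows "Min {sum u (P i) | i. i < n} \<le> mms V E n u"
proof -
  have "finite V" using assms(1) by (simp add: graph_of_goods_def)
  then show ?thesis unfolding mms_def
    by (rule Max_ge[OF fin_vals]) (use assms(2) in blast)
qed

lemma mms_att:
  assumes "graph_of_goods V E" "n \<ge> 1"
  shows "\<exists>P. is_split V E n P \<and> Min {sum u (P i) | i. i < n} = mms V E n u"
proof -
  have "mms V E n u \<in> {Min {sum u (P i) | i. i < n} | P. is_split V E n P}"
  proof -
    have "finite V" using assms(1) by (simp add: graph_of_goods_def)
    then show ?thesis unfolding mms_def
      by (rule Max_in[OF fin_vals]) (use P0_split[OF assms] in blast)
  qed
  then show ?thesis by auto
qed

lemma split_sum: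
  assumes "graph_of_goods V E" "is_split V E n P"
  shows "sum u V = (\<Sum>i<n. sum u (P i))"
proof -
  have "V = (\<Union>(P ` {..<n}))" using assms(2) by (simp add: is_split_def)
  moreover have "finite V" using assms(1) by (simp add: graph_of_goods_def)
  moreover have "sum u (\<Union>(P ` {..<n})) = (\<Sum>i<n. sum u (P i))"
  proof (rule sum.UNION_disjoint)
    show "finite {..<n}" by simp
    show "\<forall>i\<in>{..<n}. finite (P i)"
      using split_sub[OF assms(2)] \<open>finite V\<close> finite_subset by blast
    show "\<forall>i\<in>{..<n}. \<forall>j\<in>{..<n}. i \<noteq> j \<longrightarrow> P i \<inter> P j = {}"
      using assms(2) unfolding is_split_def by blast
  qed
  ultimately show ?thesis by simp
qed

lemma mms_le_avg:
  assumes "graph_of_goods V E" "n \<ge> 1"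
  shows "mms V E n u \<le> sum u V / real n"
proof -
  obtain P where P: "is_split V E n P" "Min {sum u (P i) | i. i < n} = mms V E n u"
    using mms_att[OF assms] by blast
  have "real n * mms V E n u = (\<Sum>i<n. mms V E n u)" by simp
  also have "\<dots> \<le> (\<Sum>i<n. sum u (P i))"
  proof (rule sum_mono)
    fix i assume "i \<in> {..<n}"
    then show "mms V E n u \<le> sum u (P i)" using min_le[of i n u P] P(2) by simp
  qed
  also have "\<dots> = sum u V" by (rule sym[OF split_sum[OF assms(1) P(1)]])
  finally show ?thesis using assms(2) by (simp add: field_simps)
qed

lemma mms_restrict:
  "mms V E n (restrict u V) = mms V E n u"
proof -
  have eq: "\<And>P. is_split V E n P \<Longrightarrow> {sum (restrict u V) (P i) | i. i < n} = {sum u (P i) | i. i < n}"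
  proof -
    fix P assume P: "is_split V E n P"
    have "\<And>i. i < n \<Longrightarrow> sum (restrict u V) (P i) = sum u (P i)"
      using split_sub[OF P] by (intro sum.cong) auto
    then show "{sum (restrict u V) (P i) | i. i < n} = {sum u (P i) | i. i < n}" by metis
  qed
  have i1: "{Min {sum (restrict u V) (P i) | i. i < n} | P. is_split V E n P}
      = (\<lambda>P. Min {sum (restrict u V) (P i) | i. i < n}) ` {P. is_split V E n P}" by auto
  have i2: "{Min {sum u (P i) | i. i < n} | P. is_split V E n P}
      = (\<lambda>P. Min {sum u (P i) | i. i < n}) ` {P. is_split V E n P}" by auto
  have "{Min {sum (restrict u V) (P i) | i. i < n} | P. is_split V E n P}
      = {Min {sum u (P i) | i. i < n} | P. is_split V E n P}"
    unfolding i1 i2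
  proof (rule image_cong[OF refl])
    fix P assume "P \<in> {P. is_split V E n P}"
    then have "is_split V E n P" by simp
    show "Min {sum (restrict u V) (P i) | i. i < n} = Min {sum u (P i) | i. i < n}"
      by (simp only: eq[OF \<open>is_split V E n P\<close>])
  qed
  then show ?thesis unfolding mms_def by simp
qed


definition opt_split :: "'a set \<Rightarrow> ('a \<times> 'a) set \<Rightarrow> nat \<Rightarrow> ('a \<Rightarrow> real) \<Rightarrow> nat \<Rightarrow> 'a set" where
  "opt_split V E n u = (SOME Q. is_split V E n Q \<and> Min {sum u (Q i) | i. i < n} = mms V E n u)"

definition normu :: "'a set \<Rightarrow> ('a \<times> 'a) set \<Rightarrow> nat \<Rightarrow> ('a \<Rightarrow> real) \<Rightarrow> 'a \<Rightarrow> real" where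
  "normu V E n u = (\<lambda>x. if x \<in> V then u x / sum u (opt_split V E n u (THE j. j < n \<and> x \<in> opt_split V E n u j)) else 0)"

lemma the_part:
  assumes "is_split V E n Q" "j < n" "x \<in> Q j"
  shows "(THE j. j < n \<and> x \<in> Q j) = j"
proof (rule the_equality)
  show "j < n \<and> x \<in> Q j" using assms by simp
  fix k assume "k < n \<and> x \<in> Q k"
  then show "k = j" using assms unfolding is_split_def by blast
qed

lemma normu_key:
  assumes G: "graph_of_goods V E" and n: "n \<ge> 1" and u: "utility_on V u" and m: "mms V E n u > 0"
  shows "utility_on V (normu V E n u) \<and> regular V E n (normu V E n u)
     \<and> (\<forall>S. S \<subseteq> V \<longrightarrow> mms V E n u * sum (normu V E n u) S \<le> sum u S)"
proof -
  define Q where "Q = opt_split V E n u"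
  define v where "v = normu V E n u"
  have Q: "is_split V E n Q \<and> Min {sum u (Q i) | i. i < n} = mms V E n u"
    unfolding Q_def opt_split_def using someI_ex[OF mms_att[OF G n, of u]] .
  have Qge: "\<And>j. j < n \<Longrightarrow> mms V E n u \<le> sum u (Q j)"
  proof -
    fix j assume "j < n" then show "mms V E n u \<le> sum u (Q j)" using min_le[of j n u Q] Q by simp
  qed
  have vx: "\<And>j x. j < n \<Longrightarrow> x \<in> Q j \<Longrightarrow> v x = u x / sum u (Q j)"
  proof -
    fix j x assume j: "j < n" "x \<in> Q j"
    have "x \<in> V" using split_sub[of V E n Q j] Q j by blast
    then show "v x = u x / sum u (Q j)"
      unfolding v_def normu_def Q_def[symmetric] using the_part[of V E n Q j x] Q j by simp
  qed
  have vnn: "utility_on V v"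
  proof (unfold utility_on_def, intro ballI)
    fix x assume x: "x \<in> V"
    then obtain j where j: "j < n" "x \<in> Q j" using Q unfolding is_split_def by blast
    have "0 \<le> sum u (Q j)" using Qge[OF j(1)] m by linarith
    then show "0 \<le> v x" using vx[OF j] u x unfolding utility_on_def by simp
  qed
  have vQ: "\<And>j. j < n \<Longrightarrow> sum v (Q j) = 1"
  proof -
    fix j assume j: "j < n"
    have pos: "sum u (Q j) > 0" using Qge[OF j] m by linarith
    have "sum v (Q j) = sum (\<lambda>x. u x / sum u (Q j)) (Q j)" using vx j by (intro sum.cong) auto
    also have "\<dots> = sum u (Q j) / sum u (Q j)" by (rule sum_divide_distrib[symmetric])
    also have "\<dots> = 1" using pos by simp
    finally show "sum v (Q j) = 1" .
  qed
  have "sum v V = (\<Sum>j<n. sum v (Q j))" using split_sum[OF G, of n Q v] Q by blast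
  also have "\<dots> = (\<Sum>j<n. 1)" by (rule sum.cong) (simp_all add: vQ)
  finally have sV: "sum v V = real n" by simp
  have "1 \<le> Min {sum v (Q i) | i. i < n}" using vQ n by (intro min_ge) auto
  also have "\<dots> \<le> mms V E n v" using mms_ge[OF G] Q by blast
  finally have m1: "1 \<le> mms V E n v" .
  have m2: "mms V E n v \<le> 1" using mms_le_avg[OF G n, of v] sV n by simp
  have reg: "regular V E n v" unfolding regular_def proportional_def using m1 m2 sV n by simp
  have bound: "\<forall>S. S \<subseteq> V \<longrightarrow> mms V E n u * sum v S \<le> sum u S"
  proof (intro allI impI)
    fix S assume S: "S \<subseteq> V"
    have "\<And>x. x \<in> S \<Longrightarrow> mms V E n u * v x \<le> u x"
    proof -
      fix x assume "x \<in> S"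
      then have x: "x \<in> V" using S by blast
      then obtain j where j: "j < n" "x \<in> Q j" using Q unfolding is_split_def by blast
      have pos: "sum u (Q j) > 0" using Qge[OF j(1)] m by linarith
      have ux: "u x \<ge> 0" using u x unfolding utility_on_def by simp
      have "mms V E n u * v x = u x * (mms V E n u / sum u (Q j))" using vx[OF j] by simp
      also have "\<dots> \<le> u x * 1"
        using ux Qge[OF j(1)] pos by (intro mult_left_mono) (auto simp: divide_le_eq)
      finally show "mms V E n u * v x \<le> u x" by simp
    qed
    then show "mms V E n u * sum v S \<le> sum u S"
      by (simp add: sum_distrib_left sum_mono)
  qed
  show ?thesis using vnn reg bound unfolding v_def by blast
qed


lemma sum_nn: "utility_on V u \<Longrightarrow> S \<subseteq> V \<Longrightarrow> 0 \<le> sum u S"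
  unfolding utility_on_def by (intro sum_nonneg) auto

lemma restrict_sum: "S \<subseteq> V \<Longrightarrow> sum (restrict u V) S = sum u S"
  by (intro sum.cong) auto

lemma reduce:
  assumes G: "graph_of_goods V E" and n: "n \<ge> 1" and c: "c > 0"
    and us: "\<forall>i<n. utility_on V (us i)"
  shows "(\<exists>P. c_sufficient V E n c us P) \<or>
    (\<exists>us'. (\<forall>i<n. utility_on V (us' i) \<and> regular V E n (us' i)) \<and> num_types V n us' \<le> num_types V n us
       \<and> (\<forall>P. c_sufficient V E n c us' P \<longrightarrow> c_sufficient V E n c us P))"
proof (cases "\<forall>i<n. mms V E n (us i) \<le> 0")
  case True
  have "c_sufficient V E n c us (P0 V)"
    unfolding c_sufficient_def
  proof (intro conjI allI impI)
    show sp: "is_split V E n (P0 V)" by (rule P0_split[OF G n])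
    fix i assume i: "i < n"
    have "c * mms V E n (us i) \<le> 0" using True i c by (simp add: mult_nonneg_nonpos)
    also have "\<dots> \<le> sum (us i) (P0 V i)" using sum_nn[OF us[rule_format, OF i] split_sub[OF sp i]] .
    finally show "c * mms V E n (us i) \<le> sum (us i) (P0 V i)" .
  qed
  then show ?thesis by blast
next
  case False
  then obtain k where k: "k < n" "mms V E n (us k) > 0" by force
  define g where "g = (\<lambda>w. if mms V E n w > 0 then normu V E n w else normu V E n (restrict (us k) V))"
  define us' where "us' = (\<lambda>i. g (restrict (us i) V))"
  have ru: "\<And>i. i < n \<Longrightarrow> utility_on V (restrict (us i) V)" using us unfolding utility_on_def by simp
  have mr: "\<And>i. mms V E n (restrict (us i) V) = mms V E n (us i)" by (rule mms_restrict)
  have A: "\<forall>i<n. utility_on V (us' i) \<and> regular V E n (us' i)"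
  proof (intro allI impI)
    fix i assume i: "i < n"
    show "utility_on V (us' i) \<and> regular V E n (us' i)"
    proof (cases "mms V E n (restrict (us i) V) > 0")
      case True
      then show ?thesis using normu_key[OF G n ru[OF i] True] unfolding us'_def g_def by simp
    next
      case False
      have "mms V E n (restrict (us k) V) > 0" using k mr by simp
      then show ?thesis using normu_key[OF G n ru[OF k(1)]] False unfolding us'_def g_def by simp
    qed
  qed
  have B: "num_types V n us' \<le> num_types V n us"
  proof -
    have "(\<lambda>i. restrict (us' i) V) ` {..<n} = (\<lambda>w. restrict (g w) V) ` ((\<lambda>i. restrict (us i) V) ` {..<n})"
      by (simp add: image_image us'_def)
    then show ?thesis unfolding num_types_def by (simp add: card_image_le)
  qed
  have C: "\<forall>P. c_sufficient V E n c us' P \<longrightarrow> c_sufficient V E n c us P"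
  proof (intro allI impI)
    fix P assume P: "c_sufficient V E n c us' P"
    have sp: "is_split V E n P" using P c_sufficient_def by blast
    show "c_sufficient V E n c us P"
      unfolding c_sufficient_def
    proof (intro conjI allI impI)
      show "is_split V E n P" by (rule sp)
      fix i assume i: "i < n"
      have sub: "P i \<subseteq> V" by (rule split_sub[OF sp i])
      show "c * mms V E n (us i) \<le> sum (us i) (P i)"
      proof (cases "mms V E n (us i) > 0")
        case True
        let ?w = "restrict (us i) V"
        have T: "mms V E n ?w > 0" using True mr by simp
        have us'i: "us' i = normu V E n ?w" using T unfolding us'_def g_def by simp
        have key: "regular V E n (normu V E n ?w)"
          "\<forall>S. S \<subseteq> V \<longrightarrow> mms V E n ?w * sum (normu V E n ?w) S \<le> sum ?w S"
          using normu_key[OF G n ru[OF i] T] by auto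
        have "c * 1 \<le> sum (us' i) (P i)" using P i key(1) us'i
          unfolding c_sufficient_def regular_def by auto
        then have "c \<le> sum (normu V E n ?w) (P i)" using us'i by simp
        then have "mms V E n (us i) * c \<le> mms V E n (us i) * sum (normu V E n ?w) (P i)"
          using True by (intro mult_left_mono) auto
        also have "\<dots> \<le> sum ?w (P i)" using key(2) sub mr by simp
        also have "\<dots> = sum (us i) (P i)" using restrict_sum[OF sub] .
        finally show ?thesis by (simp add: mult.commute)
      next
        case False
        have "c * mms V E n (us i) \<le> 0" using False c by (simp add: mult_nonneg_nonpos)
        also have "\<dots> \<le> sum (us i) (P i)" using sum_nn[OF us[rule_format, OF i] sub] .
        finally show ?thesis .
      qed
    qed
  qed
  show ?thesis using A B C by blast
qed

theorem proposition2p3: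
  fixes V :: "'a set" and E :: "('a \<times> 'a) set" and n t :: nat and c :: real
  assumes "graph_of_goods V E" and "n \<ge> 1" and "t \<ge> 1" and "c > 0"
  shows "((\<forall>us. (\<forall>i<n. utility_on V (us i) \<and> regular V E n (us i))
              \<longrightarrow> (\<exists>P. c_sufficient V E n c us P))
          \<longrightarrow> (\<forall>us. (\<forall>i<n. utility_on V (us i))
              \<longrightarrow> (\<exists>P. c_sufficient V E n c us P)))
       \<and> ((\<forall>us. (\<forall>i<n. utility_on V (us i) \<and> regular V E n (us i)) \<and> num_types V n us \<le> t
              \<longrightarrow> (\<exists>P. c_sufficient V E n c us P))
          \<longrightarrow> (\<forall>us. (\<forall>i<n. utility_on V (us i)) \<and> num_types V n us \<le> t
              \<longrightarrow> (\<exists>P. c_sufficient V E n c us P)))"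
proof (intro conjI impI allI)
  fix us
  assume H: "\<forall>us. (\<forall>i<n. utility_on V (us i) \<and> regular V E n (us i)) \<longrightarrow> (\<exists>P. c_sufficient V E n c us P)"
    and u: "\<forall>i<n. utility_on V (us i)"
  from reduce[OF assms(1,2,4) u] show "\<exists>P. c_sufficient V E n c us P"
  proof
    assume "\<exists>us'. (\<forall>i<n. utility_on V (us' i) \<and> regular V E n (us' i)) \<and> num_types V n us' \<le> num_types V n us
       \<and> (\<forall>P. c_sufficient V E n c us' P \<longrightarrow> c_sufficient V E n c us P)"
    then obtain us' where "\<forall>i<n. utility_on V (us' i) \<and> regular V E n (us' i)"
      "\<forall>P. c_sufficient V E n c us' P \<longrightarrow> c_sufficient V E n c us P" by blast
    then show ?thesis using H by blast
  qed
next
  fix us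
  assume H: "\<forall>us. (\<forall>i<n. utility_on V (us i) \<and> regular V E n (us i)) \<and> num_types V n us \<le> t
              \<longrightarrow> (\<exists>P. c_sufficient V E n c us P)"
    and u: "(\<forall>i<n. utility_on V (us i)) \<and> num_types V n us \<le> t"
  from reduce[OF assms(1,2,4)] u show "\<exists>P. c_sufficient V E n c us P"
  proof -
    have "(\<exists>P. c_sufficient V E n c us P) \<or>
    (\<exists>us'. (\<forall>i<n. utility_on V (us' i) \<and> regular V E n (us' i)) \<and> num_types V n us' \<le> num_types V n us
       \<and> (\<forall>P. c_sufficient V E n c us' P \<longrightarrow> c_sufficient V E n c us P))"
      using reduce[OF assms(1,2,4)] u by blast
    then show ?thesis
    proof
      assume "\<exists>us'. (\<forall>i<n. utility_on V (us' i) \<and> regular V E n (us' i)) \<and> num_types V n us' \<le> num_types V n us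
         \<and> (\<forall>P. c_sufficient V E n c us' P \<longrightarrow> c_sufficient V E n c us P)"
      then obtain us' where "\<forall>i<n. utility_on V (us' i) \<and> regular V E n (us' i)"
        "num_types V n us' \<le> num_types V n us"
        "\<forall>P. c_sufficient V E n c us' P \<longrightarrow> c_sufficient V E n c us P" by blast
      then show ?thesis using H u by (meson order_trans)
    qed
  qed
qed

end
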